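(* Let $M$ be an infinite cancellative finitely generated hyperbolic monoid. Then $M$ contains an element of infinite order.
   Context: Cancellative means both left and right cancellative. For a monoid $M$ with finite generating set $A$, the (right) Cayley digraph has vertex set $M$ and a directed edge from $m$ to $ma$ for every $m\in M$, $a\in A$. For a digraph $D$, a directed path $x_0x_1\ldots x_n$ has edges $x_ix_{i+1}$ and length $n$; $d(x,y)$ is the length of a shortest directed $x$-$y$ path ($\infty$ if none), and such a shortest path is an $x$-$y$ geodesic. The out-ball $\mathcal{B}^+_k(x)$ is $\{y: d(x,y)\le k\}$, the in-ball $\mathcal{B}^-_k(x)$ is $\{y: d(y,x)\le k\}$; for a vertex set or path $Q$, $\mathcal{B}^\pm_k(Q)$ is the union of the corresponding balls around its vertices. A geodesic triangle consists of three vertices and, for each pair of them, a geodesic between them (in one of the two directions); these are its sides. It is $\delta$-thin if whenever $P,Q,R$ are its sides such that the start vertex of $P$ is the start or end vertex of $Q$ and the end vertex of $P$ is the start or end vertex of $R$, then $P\subseteq \mathcal{B}^+_\delta(Q)\cup\mathcal{B}^-_\delta(R)$. A digraph is $\delta$-hyperbolic if all its geodesic triangles are $\delta$-thin, and hyperbolic if it is $\delta$-hyperbolic for some $\delta\ge 0$. A finitely generated monoid is hyperbolic if its Cayley digraph with respect to a finite generating set is hyperbolic. *)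

theory Defs
  imports Main "HOL-Library.Extended_Nat"
begin

definition dipath :: "('v \<Rightarrow> 'v \<Rightarrow> bool) \<Rightarrow> 'v list \<Rightarrow> bool" where
  "dipath E p \<longleftrightarrow> p \<noteq> [] \<and> (\<forall>i. Suc i < length p \<longrightarrow> E (p ! i) (p ! Suc i))"

definition plen :: "'v list \<Rightarrow> nat" where
  "plen p = length p - 1"

text \<open>Directed distance; infinity if there is no directed path.\<close>
definition ddist :: "('v \<Rightarrow> 'v \<Rightarrow> bool) \<Rightarrow> 'v \<Rightarrow> 'v \<Rightarrow> enat" where
  "ddist E x y = (INF p \<in> {p. dipath E p \<and> hd p = x \<and> last p = y}. enat (plen p))"

definition geodesic :: "('v \<Rightarrow> 'v \<Rightarrow> bool) \<Rightarrow> 'v list \<Rightarrow> 'v \<Rightarrow> 'v \<Rightarrow> bool" where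
  "geodesic E p x y \<longleftrightarrow> dipath E p \<and> hd p = x \<and> last p = y \<and> enat (plen p) = ddist E x y"

definition out_ball :: "('v \<Rightarrow> 'v \<Rightarrow> bool) \<Rightarrow> nat \<Rightarrow> 'v set \<Rightarrow> 'v set" where
  "out_ball E k Q = {y. \<exists>x\<in>Q. ddist E x y \<le> enat k}"

definition in_ball :: "('v \<Rightarrow> 'v \<Rightarrow> bool) \<Rightarrow> nat \<Rightarrow> 'v set \<Rightarrow> 'v set" where
  "in_ball E k Q = {y. \<exists>x\<in>Q. ddist E y x \<le> enat k}"

definition geodesic_triangle ::
  "('v \<Rightarrow> 'v \<Rightarrow> bool) \<Rightarrow> (nat \<Rightarrow> 'v) \<Rightarrow> (nat \<Rightarrow> 'v list) \<Rightarrow> bool" where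
  "geodesic_triangle E x S \<longleftrightarrow>
     (\<forall>i<3. geodesic E (S i) (x i) (x (Suc i mod 3)) \<or> geodesic E (S i) (x (Suc i mod 3)) (x i))"

definition thin_triangle :: "('v \<Rightarrow> 'v \<Rightarrow> bool) \<Rightarrow> nat \<Rightarrow> (nat \<Rightarrow> 'v list) \<Rightarrow> bool" where
  "thin_triangle E \<delta> S \<longleftrightarrow>
     (\<forall>i<3. \<forall>j<3. \<forall>k<3. i \<noteq> j \<and> j \<noteq> k \<and> i \<noteq> k \<longrightarrow>
        hd (S i) \<in> {hd (S j), last (S j)} \<longrightarrow> last (S i) \<in> {hd (S k), last (S k)} \<longrightarrow>
        set (S i) \<subseteq> out_ball E \<delta> (set (S j)) \<union> in_ball E \<delta> (set (S k)))"

definition hyperbolic_digraph :: "('v \<Rightarrow> 'v \<Rightarrow> bool) \<Rightarrow> bool" where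
  "hyperbolic_digraph E \<longleftrightarrow>
     (\<exists>\<delta>::nat. \<forall>x S. geodesic_triangle E x S \<longrightarrow> thin_triangle E \<delta> S)"

definition generated_submonoid :: "'a::monoid_mult set \<Rightarrow> 'a set" where
  "generated_submonoid A = {prod_list xs | xs. set xs \<subseteq> A}"

definition cayley_digraph :: "'a::monoid_mult set \<Rightarrow> 'a \<Rightarrow> 'a \<Rightarrow> bool" where
  "cayley_digraph A m m' \<longleftrightarrow> (\<exists>a\<in>A. m' = m * a)"

definition cancellative :: "'a::monoid_mult itself \<Rightarrow> bool" where
  "cancellative _ \<longleftrightarrow> (\<forall>a b c::'a. a * b = a * c \<longrightarrow> b = c) \<and> (\<forall>a b c::'a. b * a = c * a \<longrightarrow> b = c)"

definition hyperbolic_monoid :: "'a::monoid_mult itself \<Rightarrow> bool" where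
  "hyperbolic_monoid _ \<longleftrightarrow>
     (\<exists>A::'a set. finite A \<and> generated_submonoid A = UNIV \<and> hyperbolic_digraph (cayley_digraph A))"

definition infinite_order :: "'a::monoid_mult \<Rightarrow> bool" where
  "infinite_order m \<longleftrightarrow> infinite (range (\<lambda>n::nat. m ^ n))"

end

theory Submission
  imports Defs
begin


definition wpath :: "'a::monoid_mult \<Rightarrow> 'a list \<Rightarrow> 'a list" where
  "wpath x w = map (\<lambda>k. x * prod_list (take k w)) [0..<Suc (length w)]"

lemma length_wpath[simp]: "length (wpath x w) = Suc (length w)"
  by (simp add: wpath_def)

lemma wpath_nth: "i \<le> length w \<Longrightarrow> wpath x w ! i = x * prod_list (take i w)"
  unfolding wpath_def by (simp add: nth_append less_Suc_eq_le del: upt_Suc)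

lemma wpath_ne[simp]: "wpath x w \<noteq> []"
  by (metis length_wpath list.size(3) nat.distinct(1))

lemma hd_wpath[simp]: "hd (wpath x w) = x"
  by (simp add: hd_conv_nth wpath_nth)

lemma last_wpath[simp]: "last (wpath x w) = x * prod_list w"
  by (simp add: last_conv_nth wpath_nth)

lemma plen_wpath[simp]: "plen (wpath x w) = length w"
  by (simp add: plen_def)

lemma set_wpath: "y \<in> set (wpath x w) \<Longrightarrow> \<exists>i\<le>length w. y = x * prod_list (take i w)"
  by (auto simp: in_set_conv_nth wpath_nth less_Suc_eq_le)

lemma dipath_wpath: "set w \<subseteq> A \<Longrightarrow> dipath (cayley_digraph A) (wpath x w)"
  unfolding dipath_def cayley_digraph_def
proof (intro conjI allI impI)
  fix i assume "set w \<subseteq> A" "Suc i < length (wpath x w)"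
  then have i: "i < length w" by simp
  then have "wpath x w ! Suc i = wpath x w ! i * (w ! i)"
    by (simp add: wpath_nth take_Suc_conv_app_nth mult.assoc)
  moreover have "w ! i \<in> A" using i \<open>set w \<subseteq> A\<close> nth_mem by blast
  ultimately show "\<exists>a\<in>A. wpath x w ! Suc i = wpath x w ! i * a" by blast
qed simp

lemma wpath_Cons: "wpath x (b # w) = x # wpath (x * b) w"
proof -
  have "[0..<Suc (Suc (length w))] = 0 # map Suc [0..<Suc (length w)]"
    by (metis map_Suc_upt upt_conv_Cons zero_less_Suc)
  then show ?thesis unfolding wpath_def
    by (simp only: length_Cons list.map map_map) (simp add: o_def mult.assoc del: upt_Suc)
qed

lemma wpath_Nil[simp]: "wpath x [] = [x]"
  by (simp add: wpath_def)

lemma dipath_Cons: "p \<noteq> [] \<Longrightarrow> dipath E (a # p) \<longleftrightarrow> E a (hd p) \<and> dipath E p"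
  unfolding dipath_def
proof safe
  assume "p \<noteq> []" "\<forall>i. Suc i < length (a # p) \<longrightarrow> E ((a # p) ! i) ((a # p) ! Suc i)"
  then show "E a (hd p)" by (metis hd_conv_nth length_Cons length_greater_0_conv nat_add_left_cancel_less
       nth_Cons_0 nth_Cons_Suc plus_1_eq_Suc)
next
  fix i assume "\<forall>i. Suc i < length (a # p) \<longrightarrow> E ((a # p) ! i) ((a # p) ! Suc i)" "Suc i < length p"
  then show "E (p ! i) (p ! Suc i)" by (metis Suc_less_eq length_Cons nth_Cons_Suc)
next
  fix i assume "p \<noteq> []" "E a (hd p)" "\<forall>i. Suc i < length p \<longrightarrow> E (p ! i) (p ! Suc i)" "Suc i < length (a # p)"
  then show "E ((a # p) ! i) ((a # p) ! Suc i)"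
    by (cases i) (auto simp: hd_conv_nth)
qed

lemma dipath_imp_wpath: "dipath (cayley_digraph A) p \<Longrightarrow> \<exists>w. set w \<subseteq> A \<and> p = wpath (hd p) w"
proof (induction p)
  case Nil then show ?case by (simp add: dipath_def)
next
  case (Cons a p)
  show ?case
  proof (cases "p = []")
    case True then show ?thesis by (intro exI[of _ "[]"]) simp
  next
    case False
    with Cons.prems have e: "cayley_digraph A a (hd p)" and d: "dipath (cayley_digraph A) p"
      by (auto simp: dipath_Cons)
    from Cons.IH[OF d] obtain w where w: "set w \<subseteq> A" "p = wpath (hd p) w" by blast
    from e obtain b where b: "b \<in> A" "hd p = a * b" by (auto simp: cayley_digraph_def)
    show ?thesis using w b by (intro exI[of _ "b # w"]) (simp add: wpath_Cons)
  qed
qed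

lemma enat_INF_attained:
  fixes f :: "'b \<Rightarrow> enat"
  assumes "S \<noteq> {}" shows "\<exists>p\<in>S. (INF p\<in>S. f p) = f p"
proof -
  have "f ` S \<noteq> {}" using assms by simp
  then have "(LEAST x. x \<in> f ` S) \<in> f ` S" by (meson LeastI ex_in_conv)
  then show ?thesis unfolding Inf_enat_def using assms by auto
qed

lemma ddist_le_iff:
  "ddist (cayley_digraph A) x y \<le> enat n \<longleftrightarrow> (\<exists>w. set w \<subseteq> A \<and> length w \<le> n \<and> y = x * prod_list w)"
proof
  let ?S = "{p. dipath (cayley_digraph A) p \<and> hd p = x \<and> last p = y}"
  assume a: "ddist (cayley_digraph A) x y \<le> enat n"
  have "?S \<noteq> {}"
  proof
    assume e: "?S = {}"
    have "ddist (cayley_digraph A) x y = \<infinity>" unfolding ddist_def e by (simp add: top_enat_def)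
    then show False using a by simp
  qed
  from enat_INF_attained[OF this, of "\<lambda>p. enat (plen p)"] obtain p where
    p: "p \<in> ?S" "ddist (cayley_digraph A) x y = enat (plen p)" by (auto simp: ddist_def)
  then obtain w where w: "set w \<subseteq> A" "p = wpath (hd p) w" using dipath_imp_wpath by blast
  show "\<exists>w. set w \<subseteq> A \<and> length w \<le> n \<and> y = x * prod_list w"
    using p w a by (intro exI[of _ w]) (metis (mono_tags, lifting) enat_ord_simps(1) last_wpath mem_Collect_eq plen_wpath)
next
  assume "\<exists>w. set w \<subseteq> A \<and> length w \<le> n \<and> y = x * prod_list w"
  then obtain w where w: "set w \<subseteq> A" "length w \<le> n" "y = x * prod_list w" by blast
  have "ddist (cayley_digraph A) x y \<le> enat (plen (wpath x w))"
    unfolding ddist_def by (rule INF_lower) (use w dipath_wpath in auto)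
  then show "ddist (cayley_digraph A) x y \<le> enat n" using w(2)
    by (metis enat_ord_simps(1) order_trans plen_wpath)
qed



locale hg =
  fixes A :: "'a::monoid_mult set" and \<delta> :: nat
  assumes finA: "finite A"
    and gen: "generated_submonoid A = UNIV"
    and thin: "\<forall>x S. geodesic_triangle (cayley_digraph A) x S \<longrightarrow> thin_triangle (cayley_digraph A) \<delta> S"
    and lcanc: "\<And>a b c::'a. a * b = a * c \<Longrightarrow> b = c"
    and grp: "\<And>x::'a. \<exists>y. x * y = 1"
begin

abbreviation "E \<equiv> cayley_digraph A"

definition dn :: "'a \<Rightarrow> 'a \<Rightarrow> nat" where "dn x y = the_enat (ddist E x y)"

definition len :: "'a \<Rightarrow> nat" where "len x = dn 1 x"

lemma word_ex: "\<exists>w. set w \<subseteq> A \<and> prod_list w = x"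
proof -
  have "x \<in> generated_submonoid A" using gen by simp
  then show ?thesis unfolding generated_submonoid_def by blast
qed

lemma ddist_fin: "ddist E x y = enat (dn x y)"
proof -
  obtain x' where x': "x * x' = 1" using grp by blast
  obtain w where w: "set w \<subseteq> A" "prod_list w = x' * y" using word_ex by blast
  have "y = x * prod_list w" using x' w by (simp add: mult.assoc[symmetric])
  then have "ddist E x y \<le> enat (length w)" using ddist_le_iff w by blast
  then show ?thesis unfolding dn_def by (cases "ddist E x y") auto
qed

lemma dn_le_iff: "dn x y \<le> n \<longleftrightarrow> (\<exists>w. set w \<subseteq> A \<and> length w \<le> n \<and> y = x * prod_list w)"
  using ddist_le_iff[of A x y n] ddist_fin by simp

lemma dn_word: "\<exists>w. set w \<subseteq> A \<and> length w = dn x y \<and> y = x * prod_list w"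
proof -
  obtain w where w: "set w \<subseteq> A" "length w \<le> dn x y" "y = x * prod_list w"
    using dn_le_iff by blast
  then have "dn x y \<le> length w" using dn_le_iff by blast
  then show ?thesis using w by (intro exI[of _ w]) auto
qed

lemma dn_word_le: "set w \<subseteq> A \<Longrightarrow> dn x (x * prod_list w) \<le> length w"
  using dn_le_iff by blast

lemma dn_tri: "dn x z \<le> dn x y + dn y z"
proof -
  obtain w1 where w1: "set w1 \<subseteq> A" "length w1 = dn x y" "y = x * prod_list w1" using dn_word by blast
  obtain w2 where w2: "set w2 \<subseteq> A" "length w2 = dn y z" "z = y * prod_list w2" using dn_word by blast
  have "z = x * prod_list (w1 @ w2)" using w1 w2 by (simp add: mult.assoc)
  then show ?thesis by (intro dn_le_iff[THEN iffD2] exI[of _ "w1 @ w2"]) (use w1 w2 in auto)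
qed

lemma dn_left: "dn (g * x) (g * y) = dn x y"
proof (rule antisym)
  obtain w where w: "set w \<subseteq> A" "length w = dn x y" "y = x * prod_list w" using dn_word by blast
  then have "g * y = g * x * prod_list w" by (simp add: mult.assoc)
  then show "dn (g * x) (g * y) \<le> dn x y" by (intro dn_le_iff[THEN iffD2] exI[of _ w]) (use w in auto)
next
  obtain w where w: "set w \<subseteq> A" "length w = dn (g*x) (g*y)" "g * y = g * x * prod_list w" using dn_word by blast
  then have "g * y = g * (x * prod_list w)" by (simp add: mult.assoc)
  then have "y = x * prod_list w" by (rule lcanc)
  then show "dn x y \<le> dn (g * x) (g * y)" by (intro dn_le_iff[THEN iffD2] exI[of _ w]) (use w in auto)
qed

lemma dn_self[simp]: "dn x x = 0"
proof -
  have "dn x x \<le> 0" by (intro dn_le_iff[THEN iffD2] exI[of _ "[]"]) auto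
  then show ?thesis by simp
qed

lemma len_one[simp]: "len 1 = 0" by (simp add: len_def)

definition K :: nat where "K = (\<Sum>a\<in>A. dn a 1)"

lemma dn_back_word: "set w \<subseteq> A \<Longrightarrow> dn (x * prod_list w) x \<le> K * length w"
proof (induction w arbitrary: x)
  case Nil then show ?case by simp
next
  case (Cons a w)
  have aA: "a \<in> A" using Cons by simp
  have "dn (x * prod_list (a # w)) x \<le> dn (x * a * prod_list w) (x * a) + dn (x * a) x"
    using dn_tri by (simp add: mult.assoc)
  also have "dn (x * a * prod_list w) (x * a) \<le> K * length w" using Cons by simp
  also have "dn (x * a) x = dn a 1" using dn_left[of x a 1] by simp
  also have "dn a 1 \<le> K" unfolding K_def using aA finA by (intro member_le_sum) auto
  finally show ?case by simp
qed

lemma dn_back: "dn y x \<le> K * dn x y"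
proof -
  obtain w where w: "set w \<subseteq> A" "length w = dn x y" "y = x * prod_list w" using dn_word by blast
  show ?thesis using dn_back_word[OF w(1), of x] w by simp
qed

lemma len_mult: "len (x * v) \<le> len x + len v"
proof -
  have "dn 1 (x * v) \<le> dn 1 x + dn x (x * v)" by (rule dn_tri)
  moreover have "dn x (x * v) = dn 1 v" using dn_left[of x 1 v] by simp
  ultimately show ?thesis unfolding len_def by simp
qed

lemma len_mult2: "len x \<le> len (x * v) + K * len v"
proof -
  have "dn 1 x \<le> dn 1 (x * v) + dn (x * v) x" by (rule dn_tri)
  moreover have "dn (x * v) x \<le> K * dn x (x * v)" by (rule dn_back)
  moreover have "dn x (x * v) = dn 1 v" using dn_left[of x 1 v] by simp
  ultimately show ?thesis unfolding len_def by simp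
qed

lemma len_word: "set w \<subseteq> A \<Longrightarrow> len (prod_list w) \<le> length w"
  unfolding len_def using dn_word_le[of w 1] by simp

lemma len_prefix:
  assumes "set w \<subseteq> A" "len (z * prod_list w) = len z + length w" "t \<le> length w"
  shows "len (z * prod_list (take t w)) = len z + t \<and> len (prod_list (take t w)) = t"
proof -
  have s1: "set (take t w) \<subseteq> A" "set (drop t w) \<subseteq> A"
    using order_trans[OF set_take_subset assms(1)] order_trans[OF set_drop_subset assms(1)] by auto
  have pw: "prod_list w = prod_list (take t w) * prod_list (drop t w)"
    using prod_list.append[of "take t w" "drop t w"] by simp
  have "len (z * prod_list w) \<le> len (z * prod_list (take t w)) + dn (z * prod_list (take t w)) (z * prod_list w)"
    unfolding len_def by (rule dn_tri)
  moreover have "dn (z * prod_list (take t w)) (z * prod_list w) \<le> length w - t"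
  proof -
    have eq: "z * prod_list w = (z * prod_list (take t w)) * prod_list (drop t w)"
      by (simp only: pw mult.assoc)
    have "dn (z * prod_list (take t w)) (z * prod_list w) \<le> length (drop t w)"
      unfolding eq by (rule dn_word_le[OF s1(2)])
    then show ?thesis by simp
  qed
  moreover have "len (prod_list (take t w)) \<le> t" using len_word[OF s1(1)] by simp
  moreover have "len (z * prod_list (take t w)) \<le> len z + len (prod_list (take t w))" by (rule len_mult)
  ultimately show ?thesis using assms(2,3) by linarith
qed

lemma finite_ball: "finite {v. len v \<le> m}"
proof -
  have "{v. len v \<le> m} \<subseteq> prod_list ` {w. set w \<subseteq> A \<and> length w \<le> m}"
  proof
    fix v assume "v \<in> {v. len v \<le> m}"
    then obtain w where "set w \<subseteq> A" "length w \<le> m" "v = 1 * prod_list w"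
      unfolding len_def using dn_le_iff by blast
    then show "v \<in> prod_list ` {w. set w \<subseteq> A \<and> length w \<le> m}" by auto
  qed
  then show ?thesis using finite_lists_length_le[OF finA] finite_surj by blast
qed

end


context hg begin

lemma geod_wpath:
  assumes "set w \<subseteq> A" "length w = dn x y" "y = x * prod_list w"
  shows "geodesic E (wpath x w) x y"
  unfolding geodesic_def using dipath_wpath[OF assms(1), of x] assms ddist_fin[of x y] by simp

lemma GL:
  assumes w: "set w \<subseteq> A" and c: "len (z * prod_list w) = len z + length w" and v: "len v \<le> r"
    and n: "\<delta> + (K+1)*r + 1 \<le> length w"
  shows "\<exists>t<length w. \<exists>y. len y \<le> K * \<delta> \<and>
     len (z * prod_list (take t w) * y) + dn (z * prod_list (take t w) * y) (z * prod_list w * v)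
        \<le> len (z * prod_list w * v)"
proof -
  define u where "u = prod_list w"
  obtain w0 where w0: "set w0 \<subseteq> A" "length w0 = len z" "z = 1 * prod_list w0"
    using dn_word[of 1 z] unfolding len_def by blast
  obtain w1 where w1: "set w1 \<subseteq> A" "length w1 = dn (z*u) (z*u*v)" "z*u*v = z*u * prod_list w1"
    using dn_word by blast
  obtain w2 where w2: "set w2 \<subseteq> A" "length w2 = len (z*u*v)" "z*u*v = 1 * prod_list w2"
    using dn_word[of 1] unfolding len_def by blast
  define \<gamma> where "\<gamma> = wpath 1 (w0 @ w)"
  define \<sigma> where "\<sigma> = wpath (z*u) w1"
  define \<beta> where "\<beta> = wpath 1 w2"
  have g0: "geodesic E \<gamma> 1 (z*u)" unfolding \<gamma>_def
    by (rule geod_wpath) (use w0 w c in \<open>auto simp: u_def len_def mult.assoc\<close>)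
  have g1: "geodesic E \<sigma> (z*u) (z*u*v)" unfolding \<sigma>_def
    by (rule geod_wpath) (use w1 in auto)
  have g2: "geodesic E \<beta> 1 (z*u*v)" unfolding \<beta>_def
    by (rule geod_wpath) (use w2 in \<open>auto simp: len_def\<close>)
  let ?x = "(!) [1, z*u, z*u*v]" and ?S = "(!) [\<gamma>, \<sigma>, \<beta>]"
  have "geodesic_triangle E ?x ?S" unfolding geodesic_triangle_def
  proof (intro allI impI)
    fix i :: nat assume "i < 3"
    then have "i = 0 \<or> i = 1 \<or> i = 2" by auto
    then show "geodesic E (?S i) (?x i) (?x (Suc i mod 3)) \<or> geodesic E (?S i) (?x (Suc i mod 3)) (?x i)"
      using g0 g1 g2 by auto
  qed
  then have "thin_triangle E \<delta> ?S" using thin by blast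
  then have T: "\<forall>i<3. \<forall>j<3. \<forall>k<3. i \<noteq> j \<and> j \<noteq> k \<and> i \<noteq> k \<longrightarrow>
        hd (?S i) \<in> {hd (?S j), last (?S j)} \<longrightarrow> last (?S i) \<in> {hd (?S k), last (?S k)} \<longrightarrow>
        set (?S i) \<subseteq> out_ball E \<delta> (set (?S j)) \<union> in_ball E \<delta> (set (?S k))"
    unfolding thin_triangle_def .
  have "set (?S 0) \<subseteq> out_ball E \<delta> (set (?S 2)) \<union> in_ball E \<delta> (set (?S 1))"
    by (rule T[rule_format, of 0 2 1]) (use g0 g1 g2 in \<open>auto simp: geodesic_def\<close>)
  then have sub: "set \<gamma> \<subseteq> out_ball E \<delta> (set \<beta>) \<union> in_ball E \<delta> (set \<sigma>)" by simp
  define t0 where "t0 = length w - (\<delta> + (K+1)*r + 1)"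
  have t0: "t0 < length w" using n unfolding t0_def by simp
  define q where "q = z * prod_list (take t0 w)"
  have "\<gamma> ! (length w0 + t0) = 1 * prod_list (take (length w0 + t0) (w0 @ w))"
    unfolding \<gamma>_def using t0 by (intro wpath_nth) simp
  also have "\<dots> = q" using w0 by (simp add: q_def)
  finally have qq: "\<gamma> ! (length w0 + t0) = q" .
  have "length w0 + t0 < length \<gamma>" unfolding \<gamma>_def using t0 by simp
  from nth_mem[OF this] qq have "q \<in> set \<gamma>" by simp
  have lq: "len q = len z + t0" using len_prefix[OF w c, of t0] t0 unfolding q_def by simp
  have qnot: "q \<notin> in_ball E \<delta> (set \<sigma>)"
  proof
    assume "q \<in> in_ball E \<delta> (set \<sigma>)"
    then obtain s where s: "s \<in> set \<sigma>" "ddist E q s \<le> enat \<delta>" unfolding in_ball_def by blast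
    from s(2) have qs: "dn q s \<le> \<delta>" using ddist_fin by simp
    obtain i where i: "i \<le> length w1" "s = z*u*prod_list (take i w1)"
      using set_wpath s(1) unfolding \<sigma>_def by blast
    have pw: "prod_list w1 = prod_list (take i w1) * prod_list (drop i w1)"
      using prod_list.append[of "take i w1" "drop i w1"] by simp
    have "s * prod_list (drop i w1) = z*u*(prod_list (take i w1) * prod_list (drop i w1))"
      using i(2) by (simp add: mult.assoc)
    also have "\<dots> = z*u*prod_list w1" using pw by simp
    also have "\<dots> = z*u*v" using w1(3) by simp
    finally have "z*u*v = s * prod_list (drop i w1)" by simp
    moreover have "set (drop i w1) \<subseteq> A" using order_trans[OF set_drop_subset w1(1)] .
    ultimately have sz: "dn s (z*u*v) \<le> length w1" using dn_word_le[of "drop i w1" s] by simp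
    have "length w1 = len v" using w1(2) dn_left[of "z*u" 1 v] unfolding len_def by simp
    with v sz have sz2: "dn s (z*u*v) \<le> r" by simp
    have t1: "len (z*u*v) \<le> len q + dn q s + dn s (z*u*v)"
      unfolding len_def using dn_tri[of 1 "z*u*v" q] dn_tri[of q "z*u*v" s] by simp
    have t2: "len (z*u) \<le> len (z*u*v) + K * len v" by (rule len_mult2)
    have t3: "K * len v \<le> K * r" using v by simp
    have t4: "(K+1)*r = K*r + r" by simp
    have "len (z*u) = len z + length w" using c u_def by simp
    then show False using t1 t2 t3 t4 lq qs sz2 n unfolding t0_def by linarith
  qed
  have "q \<in> out_ball E \<delta> (set \<beta>) \<union> in_ball E \<delta> (set \<sigma>)" using sub \<open>q \<in> set \<gamma>\<close> by (rule subsetD)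
  with qnot have "q \<in> out_ball E \<delta> (set \<beta>)" by simp
  then obtain b where b: "b \<in> set \<beta>" "ddist E b q \<le> enat \<delta>"
    unfolding out_ball_def by auto
  from b(2) have "dn b q \<le> \<delta>" using ddist_fin by simp
  then have qb: "dn q b \<le> K * \<delta>" using dn_back[of q b] by (meson le_trans mult_le_mono2)
  obtain wy where wy: "set wy \<subseteq> A" "length wy = dn q b" "b = q * prod_list wy" using dn_word by blast
  have ly: "len (prod_list wy) \<le> K * \<delta>" using len_word[OF wy(1)] wy(2) qb by simp
  obtain i where i: "i \<le> length w2" "b = 1 * prod_list (take i w2)"
    using set_wpath b(1) unfolding \<beta>_def by blast
  have lb: "len b \<le> i" using len_word[of "take i w2"] order_trans[OF set_take_subset w2(1)] i by simp
  have pw: "prod_list w2 = prod_list (take i w2) * prod_list (drop i w2)"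
    using prod_list.append[of "take i w2" "drop i w2"] by simp
  have "b * prod_list (drop i w2) = prod_list w2" using i(2) pw by simp
  then have "z*u*v = b * prod_list (drop i w2)" using w2(3) by simp
  moreover have "set (drop i w2) \<subseteq> A" using order_trans[OF set_drop_subset w2(1)] .
  ultimately have bz: "dn b (z*u*v) \<le> length w2 - i" using dn_word_le[of "drop i w2" b] by simp
  have "len b + dn b (z*u*v) \<le> len (z*u*v)" using lb bz i w2(2) by linarith
  then show ?thesis using t0 ly wy(3) unfolding q_def u_def by (intro exI[of _ t0] conjI exI[of _ "prod_list wy"]) auto
qed


definition rr :: nat where "rr = K * \<delta> + 1"
definition NN :: nat where "NN = \<delta> + (K+1)*rr + 1"
definition SS :: nat where "SS = NN + rr"

lemma half:
  assumes w: "set w \<subseteq> A" and c: "len (z * prod_list w) = len z + length w"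
    and n: "NN \<le> length w" and v: "len v \<le> rr"
    and H: "\<forall>t<length w. \<forall>y. len y \<le> rr \<longrightarrow>
        len (z * prod_list (take t w) * y) + len z' = len (z' * prod_list (take t w) * y) + len z"
  shows "len (z' * prod_list w * v) + len z \<le> len (z * prod_list w * v) + len z'"
proof -
  from GL[OF w c v n[unfolded NN_def]] obtain t y where t: "t < length w" "len y \<le> K * \<delta>"
    "len (z * prod_list (take t w) * y) + dn (z * prod_list (take t w) * y) (z * prod_list w * v)
        \<le> len (z * prod_list w * v)" by blast
  define ut where "ut = prod_list (take t w)"
  have "len y \<le> rr" using t(2) unfolding rr_def by simp
  with H t(1) have e: "len (z * ut * y) + len z' = len (z' * ut * y) + len z" unfolding ut_def by blast
  have d: "dn (z' * ut * y) (z' * prod_list w * v) = dn (z * ut * y) (z * prod_list w * v)"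
    using dn_left[of z' "ut * y" "prod_list w * v"] dn_left[of z "ut * y" "prod_list w * v"]
    by (simp add: mult.assoc)
  have tri: "len (z' * prod_list w * v) \<le> len (z' * ut * y) + dn (z' * ut * y) (z' * prod_list w * v)"
    unfolding len_def by (rule dn_tri)
  show ?thesis using t(3) e d tri unfolding ut_def by linarith
qed

lemma CL:
  assumes sig: "\<forall>v. len v \<le> SS \<longrightarrow> len (x*v) + len x' = len (x'*v) + len x"
  shows "len u = n \<Longrightarrow> len (x*u) = len x + n \<Longrightarrow> len (x'*u) = len x' + n \<and>
     (\<forall>v. len v \<le> rr \<longrightarrow> len (x*u*v) + len (x'*u) = len (x'*u*v) + len (x*u))"
proof (induction n arbitrary: u rule: less_induct)
  case (less n u)
  show ?case
  proof (cases "n < NN")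
    case True
    have "len u \<le> SS" using True less.prems unfolding SS_def by simp
    with sig have s1: "len (x*u) + len x' = len (x'*u) + len x" by blast
    then have c': "len (x'*u) = len x' + n" using less.prems by simp
    have "len (x*u*v) + len (x'*u) = len (x'*u*v) + len (x*u)" if v: "len v \<le> rr" for v
    proof -
      have "len (u*v) \<le> len u + len v" by (rule len_mult)
      then have "len (u*v) \<le> SS" using v True less.prems unfolding SS_def by simp
      with sig have "len (x*(u*v)) + len x' = len (x'*(u*v)) + len x" by blast
      then show ?thesis using c' less.prems by (simp add: mult.assoc)
    qed
    with c' show ?thesis by blast
  next
    case False
    obtain w where w: "set w \<subseteq> A" "length w = n" "u = 1 * prod_list w"
      using dn_word[of 1 u] less.prems unfolding len_def by blast
    have uw: "u = prod_list w" using w by simp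
    have cw: "len (x * prod_list w) = len x + length w" using less.prems w uw by simp
    have pre: "len (x * prod_list (take t w)) = len x + t \<and> len (prod_list (take t w)) = t"
      if "t \<le> n" for t using len_prefix[OF w(1) cw, of t] that w by simp
    have IH: "len (x' * prod_list (take t w)) = len x' + t \<and>
       (\<forall>v. len v \<le> rr \<longrightarrow> len (x * prod_list (take t w) * v) + len (x' * prod_list (take t w))
          = len (x' * prod_list (take t w) * v) + len (x * prod_list (take t w)))"
      if "t < n" for t by (rule less.IH[OF that]) (use pre[of t] that in auto)
    have H1: "\<forall>t<length w. \<forall>y. len y \<le> rr \<longrightarrow>
        len (x * prod_list (take t w) * y) + len x' = len (x' * prod_list (take t w) * y) + len x"
    proof (intro allI impI)
      fix t y
      assume ty: "t < length w" "len y \<le> rr"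
      then have tn: "t < n" using w(2) by simp
      have A1: "len (x' * prod_list (take t w)) = len x' + t" using IH[OF tn] by blast
      have A2: "len (x * prod_list (take t w) * y) + len (x' * prod_list (take t w))
          = len (x' * prod_list (take t w) * y) + len (x * prod_list (take t w))"
        using IH[OF tn] ty(2) by blast
      have A3: "len (x * prod_list (take t w)) = len x + t" using pre[of t] tn by simp
      show "len (x * prod_list (take t w) * y) + len x' = len (x' * prod_list (take t w) * y) + len x"
        using A1 A2 A3 by linarith
    qed
    have H2: "\<forall>t<length w. \<forall>y. len y \<le> rr \<longrightarrow>
        len (x' * prod_list (take t w) * y) + len x = len (x * prod_list (take t w) * y) + len x'"
      using H1 by simp
    have nn: "NN \<le> length w" using False w by simp
    then have n0: "0 < n" using w unfolding NN_def by simp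
    define m where "m = n - 1"
    have m: "m < n" "Suc m = n" using n0 unfolding m_def by auto
    define a where "a = w ! m"
    have aA: "a \<in> A" using w m unfolding a_def by (metis nth_mem subsetD)
    have tw: "take n w = take m w @ [a]" using m w unfolding a_def
      by (metis take_Suc_conv_app_nth)
    have "prod_list w = prod_list (take n w)" using w(2) by simp
    also have "\<dots> = prod_list (take m w) * a" by (simp only: tw prod_list.append) simp
    finally have pw: "prod_list w = prod_list (take m w) * a" .
    have la: "len a \<le> rr" using len_word[of "[a]"] aA unfolding rr_def by simp
    from IH[OF m(1)] la have "len (x * prod_list (take m w) * a) + len (x' * prod_list (take m w))
          = len (x' * prod_list (take m w) * a) + len (x * prod_list (take m w))" by blast
    moreover have "len (x * prod_list w) = len (x * prod_list (take m w) * a)" using pw by (simp add: mult.assoc)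
    moreover have "len (x' * prod_list w) = len (x' * prod_list (take m w) * a)" using pw by (simp add: mult.assoc)
    moreover have "len (x' * prod_list (take m w)) = len x' + m" using IH[OF m(1)] by blast
    moreover have "len (x * prod_list (take m w)) = len x + m" using pre[of m] m by simp
    ultimately have cx': "len (x' * prod_list w) = len x' + length w"
      using m cw w(2) by linarith
    have agr: "len (x*u*v) + len (x'*u) = len (x'*u*v) + len (x*u)" if v: "len v \<le> rr" for v
    proof -
      have "len (x' * prod_list w * v) + len x \<le> len (x * prod_list w * v) + len x'"
        by (rule half[OF w(1) cw nn v H1])
      moreover have "len (x * prod_list w * v) + len x' \<le> len (x' * prod_list w * v) + len x"
        by (rule half[OF w(1) cx' nn v H2])
      ultimately show ?thesis using cw cx' uw by simp
    qed
    show ?thesis using cx' agr uw w(2) by simp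
  qed
qed

end


context hg begin

lemma main:
  assumes inf: "infinite (UNIV :: 'a set)"
  shows "\<exists>h::'a. infinite_order h"
proof -
  define B where "B = {v. len v \<le> SS}"
  define M where "M = K * SS"
  define F where "F = {f. \<forall>v. (v \<in> B \<longrightarrow> f v \<in> {- int M..int SS}) \<and> (v \<notin> B \<longrightarrow> f v = (0::int))}"
  have finB: "finite B" unfolding B_def by (rule finite_ball)
  have finF: "finite F" unfolding F_def
    by (rule finite_set_of_finite_funs[OF finB]) simp
  define sig where "sig x = (\<lambda>v. if v \<in> B then int (len (x*v)) - int (len x) else 0)" for x
  have sigF: "sig x \<in> F" for x
  proof -
    have "sig x v \<in> {- int M..int SS}" if "v \<in> B" for v
    proof -
      have l: "len v \<le> SS" using that unfolding B_def by simp
      have "len (x*v) \<le> len x + len v" by (rule len_mult)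
      moreover have "len x \<le> len (x*v) + K * len v" by (rule len_mult2)
      moreover have "K * len v \<le> M" using l unfolding M_def by simp
      ultimately have a1: "len (x*v) \<le> len x + SS" and a2: "len x \<le> len (x*v) + M" using l by linarith+
      have b1: "int (len (x*v)) \<le> int (len x) + int SS" using of_nat_mono[OF a1] by simp
      have b2: "int (len x) \<le> int (len (x*v)) + int M" using of_nat_mono[OF a2] by simp
      show ?thesis using that b1 b2 unfolding sig_def by simp
    qed
    then show ?thesis unfolding F_def sig_def by auto
  qed
  have "\<not> UNIV \<subseteq> {v. len v \<le> card F}" using inf finite_ball finite_subset by blast
  then obtain g where "g \<notin> {v. len v \<le> card F}" by blast
  then have g: "card F < len g" by simp
  obtain w where w: "set w \<subseteq> A" "length w = len g" "g = 1 * prod_list w"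
    using dn_word[of 1 g] unfolding len_def by blast
  have cw: "len (1 * prod_list w) = len 1 + length w" using w by simp
  define p where "p t = prod_list (take t w)" for t
  have lp: "len (p t) = t" if "t \<le> length w" for t
    using len_prefix[OF w(1) cw that] unfolding p_def by simp
  have "\<not> inj_on (sig \<circ> p) {0..length w}"
  proof
    assume "inj_on (sig \<circ> p) {0..length w}"
    moreover have "(sig \<circ> p) ` {0..length w} \<subseteq> F" using sigF by auto
    ultimately have "card {0..length w} \<le> card F" using card_inj_on_le finF by blast
    then show False using g w(2) by simp
  qed
  then obtain i0 j0 where ij0: "i0 \<le> length w" "j0 \<le> length w" "i0 \<noteq> j0" "sig (p i0) = sig (p j0)"
    unfolding inj_on_def by auto
  obtain i j where ij: "i < j" "j \<le> length w" "sig (p i) = sig (p j)"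
  proof (cases "i0 < j0")
    case True then show ?thesis using that ij0 by blast
  next
    case False then show ?thesis using that[of j0 i0] ij0 by auto
  qed
  define h where "h = prod_list (drop i (take j w))"
  have "take j w = take i (take j w) @ drop i (take j w)" by (rule append_take_drop_id[symmetric])
  also have "take i (take j w) = take i w" using ij(1) by (simp add: min_def)
  finally have "prod_list (take j w) = prod_list (take i w) * h" unfolding h_def
    by (metis prod_list.append)
  then have pj: "p j = p i * h" unfolding p_def .
  have li: "len (p i) = i" and lj: "len (p j) = j" using lp ij by auto
  have hA: "set (drop i (take j w)) \<subseteq> A"
    using order_trans[OF set_drop_subset order_trans[OF set_take_subset w(1)]] .
  have "len h \<le> j - i" using len_word[OF hA] ij unfolding h_def by simp
  moreover have "len (p j) \<le> len (p i) + len h" unfolding pj by (rule len_mult)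
  ultimately have lh: "len h = j - i" using li lj by linarith
  define d where "d = j - i"
  have d0: "0 < d" using ij unfolding d_def by simp
  have sg: "\<forall>v. len v \<le> SS \<longrightarrow> len (p i * v) + len (p j) = len (p j * v) + len (p i)"
  proof (intro allI impI)
    fix v assume "len v \<le> SS"
    then have "v \<in> B" unfolding B_def by simp
    then have "int (len (p i * v)) - int (len (p i)) = int (len (p j * v)) - int (len (p j))"
      using fun_cong[OF ij(3), of v] unfolding sig_def by simp
    then show "len (p i * v) + len (p j) = len (p j * v) + len (p i)" by linarith
  qed
  note cl = CL[OF sg]
  have pow: "len (h^m) = m * d \<and> len (p i * h^m) = len (p i) + m * d" for m
  proof (induction m)
    case 0 then show ?case by simp
  next
    case (Suc m)
    have "len (p j * h^m) = len (p j) + m * d" using cl[of "h^m" "m*d"] Suc by blast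
    moreover have "p j * h^m = p i * h^(Suc m)" using pj by (simp add: mult.assoc)
    moreover have "len (h^(Suc m)) \<le> len h + len (h^m)" by (simp add: len_mult)
    moreover have "len (p i * h^(Suc m)) \<le> len (p i) + len (h^(Suc m))" by (rule len_mult)
    ultimately show ?case using Suc lh li lj ij(1) unfolding d_def by auto
  qed
  have "inj (\<lambda>m. h^m)"
  proof (rule injI)
    fix a b :: nat assume "h^a = h^b"
    then have "len (h^a) = len (h^b)" by simp
    then have "a * d = b * d" using pow[of a] pow[of b] by linarith
    then show "a = b" using d0 by simp
  qed
  then have "infinite (range (\<lambda>m::nat. h^m))"
    using finite_imageD[of "\<lambda>m::nat. h^m" UNIV] by auto
  then show ?thesis unfolding infinite_order_def by blast
qed

end

theorem theorem4p1:
  assumes "infinite (UNIV :: 'a::monoid_mult set)"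
    and "cancellative TYPE('a)"
    and "\<exists>A::'a set. finite A \<and> generated_submonoid A = UNIV"
    and "hyperbolic_monoid TYPE('a)"
  shows "\<exists>m::'a. infinite_order m"
proof (cases "\<forall>x::'a. \<exists>y. x * y = 1")
  case True
  from assms(4) obtain A :: "'a set" where A: "finite A" "generated_submonoid A = UNIV"
    "hyperbolic_digraph (cayley_digraph A)" unfolding hyperbolic_monoid_def by blast
  then obtain \<delta> where d: "\<forall>x S. geodesic_triangle (cayley_digraph A) x S \<longrightarrow> thin_triangle (cayley_digraph A) \<delta> S"
    unfolding hyperbolic_digraph_def by blast
  have lc: "\<And>a b c::'a. a * b = a * c \<Longrightarrow> b = c" using assms(2) unfolding cancellative_def by blast
  interpret hg A \<delta>
    by (unfold_locales) (use A d lc True in auto)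
  show ?thesis by (rule main[OF assms(1)])
next
  case False
  then obtain x :: 'a where x: "\<forall>y. x * y \<noteq> 1" by blast
  have lc: "\<And>a b c::'a. a * b = a * c \<Longrightarrow> b = c" using assms(2) unfolding cancellative_def by blast
  have "infinite (range (\<lambda>n::nat. x^n))"
  proof
    assume fin: "finite (range (\<lambda>n::nat. x^n))"
    have "\<not> inj (\<lambda>n::nat. x^n)"
    proof
      assume "inj (\<lambda>n::nat. x^n)"
      then have "finite (UNIV :: nat set)" using finite_imageD[OF fin] by blast
      then show False by simp
    qed
    then obtain a b :: nat where ab: "a \<noteq> b" "x^a = x^b" unfolding inj_def by blast
    obtain a' b' :: nat where ab': "a' < b'" "x^a' = x^b'"
    proof (cases "a < b")
      case True then show ?thesis using that ab by blast
    next
      case False then show ?thesis using that[of b a] ab by auto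
    qed
    have "x^a' * x^(b' - a') = x^b'" using ab'(1) by (simp add: power_add[symmetric])
    then have "x^a' * 1 = x^a' * x^(b' - a')" using ab'(2) by simp
    then have "x^(b' - a') = 1" using lc by metis
    moreover have "b' - a' = Suc (b' - a' - 1)" using ab' by simp
    ultimately have "x * x^(b' - a' - 1) = 1" by (metis power_Suc)
    then show False using x by blast
  qed
  then show ?thesis unfolding infinite_order_def by blast
qed


end
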